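(* Let $G$ be a finite simple graph with at least $66$ vertices and $G\in\mathcal{F}_3$. Then $crx_3(G)>4$; that is, no edge-colouring of $G$ with at most $4$ colours has the property that any three vertices of $G$ lie on a common rainbow cycle.
   Context: An edge-coloured cycle is rainbow if all its edges have distinct colours. For $k\ge 1$, $\mathcal{F}_k$ is the family of graphs in which any $k$ vertices lie on a common cycle. For $G\in\mathcal{F}_k$, a $k$-rainbow cycle colouring of $G$ is an edge-colouring such that any $k$ vertices of $G$ lie on a common rainbow cycle; $crx_k(G)$ is the minimum number of colours in a $k$-rainbow cycle colouring of $G$. *)

theory Defs
  imports Main
begin

definition simple_graph :: "'a set \<Rightarrow> 'a set set \<Rightarrow> bool" where
  "simple_graph V E \<longleftrightarrow> finite V \<and> (\<forall>e\<in>E. e \<subseteq> V \<and> card e = 2)"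

definition is_cycle :: "'a set set \<Rightarrow> 'a list \<Rightarrow> bool" where
  "is_cycle E vs \<longleftrightarrow> distinct vs \<and> length vs \<ge> 3 \<and>
     (\<forall>i < length vs. {vs ! i, vs ! ((i + 1) mod length vs)} \<in> E)"

definition cycle_edges :: "'a list \<Rightarrow> 'a set set" where
  "cycle_edges vs = {{vs ! i, vs ! ((i + 1) mod length vs)} | i. i < length vs}"

definition rainbow_cycle :: "'a set set \<Rightarrow> ('a set \<Rightarrow> 'c) \<Rightarrow> 'a list \<Rightarrow> bool" where
  "rainbow_cycle E c vs \<longleftrightarrow> is_cycle E vs \<and> inj_on c (cycle_edges vs)"

definition in_F :: "nat \<Rightarrow> 'a set \<Rightarrow> 'a set set \<Rightarrow> bool" where
  "in_F k V E \<longleftrightarrow> (\<forall>S. S \<subseteq> V \<and> card S = k \<longrightarrow> (\<exists>vs. is_cycle E vs \<and> S \<subseteq> set vs))"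

definition rainbow_cycle_colouring :: "nat \<Rightarrow> 'a set \<Rightarrow> 'a set set \<Rightarrow> ('a set \<Rightarrow> 'c) \<Rightarrow> bool" where
  "rainbow_cycle_colouring k V E c \<longleftrightarrow>
     (\<forall>S. S \<subseteq> V \<and> card S = k \<longrightarrow> (\<exists>vs. rainbow_cycle E c vs \<and> S \<subseteq> set vs))"

end

theory Submission
  imports Defs
begin


definition T :: "'a set set \<Rightarrow> ('a set \<Rightarrow> 'b) \<Rightarrow> 'a \<Rightarrow> 'a \<Rightarrow> 'a \<Rightarrow> bool" where
 "T E c x y z \<longleftrightarrow> (\<exists>e1\<in>{{x,y},{x,z},{y,z}} \<inter> E. \<exists>e2\<in>{{x,y},{x,z},{y,z}} \<inter> E. c e1 \<noteq> c e2)"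

lemma pair_cases:
  assumes "p \<in> {a,b,c,d}" "q \<in> {a,b,c,d}" "p\<noteq>q"
  shows "{p,q} \<in> {{a,b},{b,c},{c,d},{d,a}} \<or> {p,q} \<in> {{a,c},{b,d}}"
  using assms by (auto simp: insert_commute)

lemma four_pairs:
  assumes "x \<in> {a,b,c,d}" "y \<in> {a,b,c,d}" "z \<in> {a,b,c,d}" "x\<noteq>y" "x\<noteq>z" "y\<noteq>z"
   "distinct [a,b,c,d]"
  shows "\<exists>e1\<in>{{x,y},{x,z},{y,z}}. \<exists>e2\<in>{{x,y},{x,z},{y,z}}. e1 \<noteq> e2 \<and>
     e1 \<in> {{a,b},{b,c},{c,d},{d,a}} \<and> e2 \<in> {{a,b},{b,c},{c,d},{d,a}}"
proof -
  define C where "C = {{a,b},{b,c},{c,d},{d,a}}"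
  define N where "N = {{a,c},{b,d}}"
  have ne: "{x,y} \<noteq> {x,z}" "{x,y} \<noteq> {y,z}" "{x,z} \<noteq> {y,z}" using assms by (auto simp: doubleton_eq_iff)
  have dj: "\<And>P Q. P \<in> N \<Longrightarrow> Q \<in> N \<Longrightarrow> P \<inter> Q \<noteq> {} \<Longrightarrow> P = Q"
    using assms(7) unfolding N_def by auto
  have p1: "{x,y} \<in> C \<or> {x,y} \<in> N" using pair_cases[OF assms(1,2,4)] unfolding C_def N_def by auto
  have p2: "{x,z} \<in> C \<or> {x,z} \<in> N" using pair_cases[OF assms(1,3,5)] unfolding C_def N_def by auto
  have p3: "{y,z} \<in> C \<or> {y,z} \<in> N" using pair_cases[OF assms(2,3,6)] unfolding C_def N_def by auto
  have i1: "{x,y} \<inter> {x,z} \<noteq> {}" "{x,y} \<inter> {y,z} \<noteq> {}" "{x,z} \<inter> {y,z} \<noteq> {}" by auto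
  have "({x,y} \<in> C \<and> {x,z} \<in> C) \<or> ({x,y} \<in> C \<and> {y,z} \<in> C) \<or> ({x,z} \<in> C \<and> {y,z} \<in> C)"
  proof (cases "{x,y} \<in> C")
    case True
    show ?thesis
    proof (cases "{x,z} \<in> C")
      case False
      hence "{x,z} \<in> N" using p2 by simp
      have "{y,z} \<in> C"
      proof (rule ccontr)
        assume "{y,z} \<notin> C"
        hence "{y,z} \<in> N" using p3 by simp
        from dj[OF \<open>{x,z} \<in> N\<close> this i1(3)] ne(3) show False by simp
      qed
      thus ?thesis using True by simp
    qed (use True in simp)
  next
    case False
    hence n1: "{x,y} \<in> N" using p1 by simp
    have "{x,z} \<in> C"
    proof (rule ccontr)
      assume "{x,z} \<notin> C" hence "{x,z} \<in> N" using p2 by simp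
      from dj[OF n1 this i1(1)] ne(1) show False by simp
    qed
    moreover have "{y,z} \<in> C"
    proof (rule ccontr)
      assume "{y,z} \<notin> C" hence "{y,z} \<in> N" using p3 by simp
      from dj[OF n1 this i1(2)] ne(2) show False by simp
    qed
    ultimately show ?thesis by simp
  qed
  then consider "{x,y} \<in> C" "{x,z} \<in> C" | "{x,y} \<in> C" "{y,z} \<in> C" | "{x,z} \<in> C" "{y,z} \<in> C" by blast
  thus ?thesis
  proof cases
    case 1 show ?thesis unfolding C_def[symmetric]
      apply (rule bexI[where x="{x,y}"]) apply (rule bexI[where x="{x,z}"]) using 1 ne by simp_all
  next
    case 2 show ?thesis unfolding C_def[symmetric]
      apply (rule bexI[where x="{x,y}"]) apply (rule bexI[where x="{y,z}"]) using 2 ne by simp_all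
  next
    case 3 show ?thesis unfolding C_def[symmetric]
      apply (rule bexI[where x="{x,z}"]) apply (rule bexI[where x="{y,z}"]) using 3 ne by simp_all
  qed
qed

lemma edge_in: "i < length vs \<Longrightarrow> {vs ! i, vs ! ((i + 1) mod length vs)} \<in> cycle_edges vs"
  unfolding cycle_edges_def by blast

lemma cyc_T:
  assumes rc: "rainbow_cycle E c vs" and cE: "card (c ` E) \<le> 4" and fE: "finite E"
   and xyz: "x\<in>set vs" "y \<in> set vs" "z\<in>set vs" "x\<noteq>y" "x\<noteq>z" "y\<noteq>z"
  shows "T E c x y z"
proof -
  have cyc: "is_cycle E vs" and inj: "inj_on c (cycle_edges vs)" using rc unfolding rainbow_cycle_def by auto
  have dist: "distinct vs" and l3: "length vs \<ge> 3" and ed: "\<And>i. i < length vs \<Longrightarrow> {vs ! i, vs ! ((i + 1) mod length vs)} \<in> E"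
    using cyc unfolding is_cycle_def by auto
  have ceE: "cycle_edges vs \<subseteq> E" using ed unfolding cycle_edges_def by blast
  have l4: "length vs \<le> 4"
  proof (rule ccontr)
    assume "\<not> length vs \<le> 4"
    hence l5: "length vs \<ge> 5" by simp
    define l where "l = length vs"
    have vne: "vs \<noteq> []" using l5 by auto
    define w where "w = vs ! (5 mod l)"
    have ne: "\<And>i j. i < l \<Longrightarrow> j < l \<Longrightarrow> i \<noteq> j \<Longrightarrow> vs ! i \<noteq> vs ! j"
      using dist l_def by (simp add: nth_eq_iff_index_eq)
    have m5: "5 mod l \<notin> {1,2,3,4}" using l5 l_def
      by (cases "l = 5") auto
    have m5l: "5 mod l < l" using l5 unfolding l_def by (intro mod_less_divisor) (cases vs; simp)
    have w: "w \<noteq> vs!1" "w \<noteq> vs!2" "w \<noteq> vs!3" "w \<noteq> vs!4"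
      using ne[OF m5l] m5 l5 l_def unfolding w_def by auto
    have d: "vs!0 \<noteq> vs!1" "vs!0 \<noteq> vs!2" "vs!0 \<noteq> vs!3" "vs!0 \<noteq> vs!4"
      "vs!1 \<noteq> vs!2" "vs!1 \<noteq> vs!3" "vs!1 \<noteq> vs!4" "vs!2 \<noteq> vs!3" "vs!2 \<noteq> vs!4" "vs!3 \<noteq> vs!4"
      using ne[of 0 1] ne[of 0 2] ne[of 0 3] ne[of 0 4] ne[of 1 2] ne[of 1 3] ne[of 1 4]
        ne[of 2 3] ne[of 2 4] ne[of 3 4] l5 l_def vne by auto
    let ?F = "{{vs!0,vs!1},{vs!1,vs!2},{vs!2,vs!3},{vs!3,vs!4},{vs!4,w}}"
    have sub: "?F \<subseteq> cycle_edges vs"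
      using edge_in[of 0 vs] edge_in[of 1 vs] edge_in[of 2 vs] edge_in[of 3 vs] edge_in[of 4 vs] l5 l_def w_def vne
      by (auto simp: eval_nat_numeral)
    have "card ?F = 5" using d w by (simp add: doubleton_eq_iff)
    moreover have "card (c ` ?F) = card ?F" using inj sub by (meson card_image inj_on_subset)
    moreover have "card (c ` ?F) \<le> card (c ` E)" using sub ceE fE by (intro card_mono) auto
    ultimately show False using cE by simp
  qed
  show ?thesis
  proof (cases "length vs = 3")
    case True
    then obtain a b d where vs: "vs = [a,b,d]" by (auto simp: numeral_eq_Suc length_Suc_conv)
    have "{a,b} \<in> cycle_edges vs" "{b,d} \<in> cycle_edges vs" "{d,a} \<in> cycle_edges vs"
      using edge_in[of 0 vs] edge_in[of 1 vs] edge_in[of 2 vs] vs by auto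
    hence allin: "\<And>p q. p \<in> {a,b,d} \<Longrightarrow> q \<in> {a,b,d} \<Longrightarrow> p \<noteq> q \<Longrightarrow> {p,q} \<in> cycle_edges vs"
      by (auto simp: insert_commute)
    have "{x,y} \<in> cycle_edges vs" "{x,z} \<in> cycle_edges vs" using allin xyz vs by auto
    moreover have "{x,y} \<noteq> {x,z}" using xyz by (auto simp: doubleton_eq_iff)
    ultimately have "c {x,y} \<noteq> c {x,z}" using inj by (meson inj_on_contraD)
    thus ?thesis unfolding T_def using \<open>{x,y} \<in> cycle_edges vs\<close> \<open>{x,z} \<in> cycle_edges vs\<close> ceE by blast
  next
    case False
    hence "length vs = 4" using l3 l4 by simp
    then obtain a b d e where vs: "vs = [a,b,d,e]" by (auto simp: numeral_eq_Suc length_Suc_conv)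
    have "{a,b} \<in> cycle_edges vs" "{b,d} \<in> cycle_edges vs" "{d,e} \<in> cycle_edges vs" "{e,a} \<in> cycle_edges vs"
      using edge_in[of 0 vs] edge_in[of 1 vs] edge_in[of 2 vs] edge_in[of 3 vs] vs by auto
    hence sub: "{{a,b},{b,d},{d,e},{e,a}} \<subseteq> cycle_edges vs" by auto
    obtain e1 e2 where e: "e1\<in>{{x,y},{x,z},{y,z}}" "e2\<in>{{x,y},{x,z},{y,z}}" "e1 \<noteq> e2"
      "e1 \<in> {{a,b},{b,d},{d,e},{e,a}}" "e2 \<in> {{a,b},{b,d},{d,e},{e,a}}"
    proof -
      have m: "x \<in> {a,b,d,e}" "y \<in> {a,b,d,e}" "z \<in> {a,b,d,e}" using xyz vs by simp_all
      have "distinct [a,b,d,e]" using dist vs by simp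
      from four_pairs[OF m xyz(4-6) this] show ?thesis
        apply (elim bexE conjE)
        apply (rule that)
        by assumption+
    qed
    have "e1 \<in> cycle_edges vs" "e2 \<in> cycle_edges vs" using e(4,5) sub by (meson subsetD)+
    hence "c e1 \<noteq> c e2" using inj e(3) by (meson inj_on_contraD)
    moreover have "e1 \<in> E" "e2 \<in> E" using \<open>e1 \<in> cycle_edges vs\<close> \<open>e2 \<in> cycle_edges vs\<close> ceE by auto
    ultimately show ?thesis unfolding T_def using e(1,2) by blast
  qed
qed



lemma Tcases: assumes "T E c x y z"
  obtains e1 e2 where "e1 = {x,y} \<or> e1 = {x,z} \<or> e1 = {y,z}" "e2 = {x,y} \<or> e2 = {x,z} \<or> e2 = {y,z}"
    "e1 \<in> E" "e2 \<in> E" "c e1 \<noteq> c e2"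
  using assms unfolding T_def by blast

lemma inv_even:
  assumes "finite S" "\<forall>x\<in>S. f x \<in> S \<and> f x \<noteq> x \<and> f (f x) = x"
  shows "even (card S)"
  using assms
proof (induction "card S" arbitrary: S rule: less_induct)
  case less
  show ?case
  proof (cases "S = {}")
    case True thus ?thesis by simp
  next
    case False then obtain x where x: "x\<in>S" by auto
    have fx: "f x \<in> S" "f x \<noteq> x" "f (f x) = x" using less.prems x by auto
    have sub: "{x, f x} \<subseteq> S" using x fx by auto
    have c2: "card {x, f x} = 2" using fx by auto
    have cS: "card (S - {x, f x}) = card S - 2"
      using card_Diff_subset[OF _ sub] c2 less.prems(1) by simp
    have ge: "card S \<ge> 2" using card_mono[OF less.prems(1) sub] c2 by simp
    have P: "\<forall>y\<in>S - {x, f x}. f y \<in> S - {x, f x} \<and> f y \<noteq> y \<and> f (f y) = y"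
    proof
      fix y assume y: "y \<in> S - {x, f x}"
      have p: "f y \<in> S" "f y \<noteq> y" "f (f y) = y" using less.prems(2) y by auto
      have "f y \<noteq> x" using p(3) y by auto
      moreover have "f y \<noteq> f x"
      proof
        assume "f y = f x" hence "y = x" using p(3) fx(3) by metis
        with y show False by auto
      qed
      ultimately show "f y \<in> S - {x, f x} \<and> f y \<noteq> y \<and> f (f y) = y" using p by auto
    qed
    have "even (card (S - {x, f x}))"
      using less.hyps[of "S - {x, f x}"] cS ge P less.prems(1) by simp
    thus ?thesis using cS ge by simp
  qed
qed

locale tri =
  fixes V :: "'a set" and E :: "'a set set" and c :: "'a set \<Rightarrow> 'b"
  assumes finV: "finite V"
  and tri: "\<And>x y z. \<lbrakk>x\<in>V; y\<in>V; z\<in>V; x\<noteq>y; x\<noteq>z; y\<noteq>z\<rbrakk> \<Longrightarrow> T E c x y z"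
begin

lemma D1: assumes "x\<in>V" "y\<in>V" "z\<in>V" "x\<noteq>y" "x\<noteq>z" "y\<noteq>z" "{x,y}\<notin>E" "{x,z}\<notin>E"
  shows False
  using tri[OF assms(1-6)] by (rule Tcases) (use assms(7,8) in auto)

lemma D2: assumes "x\<in>V" "y\<in>V" "z\<in>V" "x\<noteq>y" "x\<noteq>z" "y\<noteq>z" "{x,y}\<in>E" "{x,z}\<in>E" "c{x,y}=c{x,z}"
  shows "{y,z}\<in>E \<and> c{y,z} \<noteq> c{x,y}"
  using tri[OF assms(1-6)] by (rule Tcases) (use assms(7-9) in auto)

lemma D3: assumes "x\<in>V" "u\<in>V" "y\<in>V" "x\<noteq>u" "x\<noteq>y" "u\<noteq>y" "{x,u}\<notin>E"
  shows "{x,y}\<in>E \<and> {u,y}\<in>E \<and> c{x,y} \<noteq> c{u,y}"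
  using tri[OF assms(1-6)] by (rule Tcases) (use assms(7) in auto)

definition cols where "cols S K \<longleftrightarrow> (\<forall>y\<in>S. \<forall>z\<in>S. y\<noteq>z \<longrightarrow> {y,z}\<in>E \<longrightarrow> c{y,z}\<in>K)"
definition N where "N x j S = {y\<in>S. y\<noteq>x \<and> {x,y}\<in>E \<and> c{x,y}=j}"
definition M where "M x S = {y\<in>S. y\<noteq>x \<and> {x,y}\<notin>E}"

lemma card_M: assumes "x\<in>V" "S\<subseteq>V" shows "card (M x S) \<le> 1"
proof -
  have fin: "finite (M x S)" using finV assms unfolding M_def by (auto intro: finite_subset)
  show ?thesis unfolding One_nat_def card_le_Suc0_iff_eq[OF fin]
  proof (intro ballI)
    fix y z assume "y \<in> M x S" "z \<in> M x S"
    then show "y = z" using D1[of x y z] assms unfolding M_def by auto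
  qed
qed

lemma cols_N: assumes "x\<in>V" "S\<subseteq>V" "cols S K" shows "cols (N x j S) (K - {j})"
  unfolding cols_def
proof (intro ballI impI)
  fix y z assume y: "y \<in> N x j S" and z: "z \<in> N x j S" and yz: "y\<noteq>z" "{y,z}\<in>E"
  have "c{y,z} \<noteq> j" using D2[of x y z] assms y z yz unfolding N_def by auto
  moreover have "c{y,z}\<in>K" using assms(3) y z yz unfolding cols_def N_def by auto
  ultimately show "c{y,z} \<in> K - {j}" by simp
qed

lemma card_decomp: assumes "x\<in>S" "S\<subseteq>V" "cols S K" "finite K"
  shows "card S \<le> Suc (card (M x S) + (\<Sum>j\<in>K. card (N x j S)))"
proof -
  have fS: "finite S" using assms finV finite_subset by blast
  have fM: "finite (M x S)" using fS unfolding M_def by simp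
  have fN: "\<And>j. finite (N x j S)" using fS unfolding N_def by simp
  have fU: "finite (\<Union>j\<in>K. N x j S)" using fN assms(4) by simp
  have "S \<subseteq> insert x (M x S \<union> (\<Union>j\<in>K. N x j S))"
  proof
    fix y assume y: "y\<in>S"
    show "y \<in> insert x (M x S \<union> (\<Union>j\<in>K. N x j S))"
    proof (cases "y = x")
      case True thus ?thesis by simp
    next
      case False
      show ?thesis
      proof (cases "{x,y} \<in> E")
        case True
        have "c{x,y} \<in> K" using assms(3) False y assms(1) True unfolding cols_def by metis
        moreover have "y \<in> N x (c{x,y}) S" using y False True unfolding N_def by simp
        ultimately show ?thesis by blast
      next
        case F2: False
        have "y \<in> M x S" using y False F2 unfolding M_def by simp
        thus ?thesis by simp
      qed
    qed
  qed
  hence "card S \<le> card (insert x (M x S \<union> (\<Union>j\<in>K. N x j S)))"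
    by (rule card_mono[rotated]) (use fM fU in simp)
  also have "\<dots> \<le> Suc (card (M x S \<union> (\<Union>j\<in>K. N x j S)))"
    using fM fU by (simp add: card_insert_if)
  also have "\<dots> \<le> Suc (card (M x S) + card (\<Union>j\<in>K. N x j S))"
    using card_Un_le by simp
  also have "\<dots> \<le> Suc (card (M x S) + (\<Sum>j\<in>K. card (N x j S)))"
    using card_UN_le[OF assms(4)] by simp
  finally show ?thesis .
qed

lemma h1: assumes "S\<subseteq>V" "cols S K" "finite K" "card K \<le> 1" shows "card S \<le> 2"
proof (rule ccontr)
  assume "\<not> card S \<le> 2" hence "3 \<le> card S" by simp
  then obtain U where U0: "U \<subseteq> S" "card U = 3" by (meson obtain_subset_with_card_n)
  then obtain x y z where U: "U = {x,y,z}" "x\<noteq>y" "y\<noteq>z" "x\<noteq>z" by (auto simp: card_3_iff)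
  have xyz: "x\<in>S" "y\<in>S" "z\<in>S" using U U0 by auto
  have "T E c x y z" using tri[of x y z] xyz assms(1) U by auto
  then obtain e1 e2 where e: "e1 = {x,y} \<or> e1 = {x,z} \<or> e1 = {y,z}" "e1\<in>E" "e2 = {x,y} \<or> e2 = {x,z} \<or> e2 = {y,z}" "e2 \<in> E" "c e1 \<noteq> c e2"
    by (rule Tcases) blast
  have ck: "\<And>p q. p\<in>S \<Longrightarrow> q\<in>S \<Longrightarrow> p\<noteq>q \<Longrightarrow> {p,q}\<in>E \<Longrightarrow> c{p,q}\<in>K"
    using assms(2) unfolding cols_def by blast
  have "c e1 \<in> K" using e(1,2) ck xyz U(2-4) by auto
  moreover have "c e2 \<in> K" using e(3,4) ck xyz U(2-4) by auto
  moreover have "card K \<le> Suc 0" using assms(4) by simp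
  hence "\<forall>a\<in>K. \<forall>b\<in>K. a=b" using card_le_Suc0_iff_eq[OF assms(3)] by blast
  ultimately show False using e(5) by blast
qed

lemma two_elems: assumes "card A \<ge> 2" obtains y1 y2 where "y1 \<in> A" "y2 \<in> A" "y1 \<noteq> y2"
proof -
  obtain U where "U \<subseteq> A" "card U = 2" using assms by (meson obtain_subset_with_card_n)
  then show ?thesis using that by (auto simp: card_2_iff)
qed

lemma h2: assumes "S\<subseteq>V" "cols S K" "finite K" "card K \<le> 2" shows "card S \<le> 5"
proof (rule ccontr)
  assume "\<not> card S \<le> 5" hence c6: "card S \<ge> 6" by simp
  hence "S \<noteq> {}" by auto then obtain x where x: "x\<in>S" by auto
  have xV: "x\<in>V" using x assms by auto
  have Nb: "\<forall>j\<in>K. card (N x j S) \<le> 2"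
  proof
    fix j assume "j\<in>K"
    have cK: "card (K - {j}) \<le> 1" using \<open>j\<in>K\<close> assms(3,4) by simp
    show "card (N x j S) \<le> 2"
      by (rule h1[OF _ cols_N[OF xV assms(1,2)] _ cK]) (use assms in \<open>auto simp: N_def\<close>)
  qed
  have sumle: "(\<Sum>j\<in>K. card (N x j S)) \<le> card K * 2"
    using sum_bounded_above[of K "\<lambda>j. card (N x j S)" 2] Nb by simp
  have dec: "card S \<le> Suc (card (M x S) + (\<Sum>j\<in>K. card (N x j S)))"
    by (rule card_decomp[OF x assms(1,2,3)])
  have cM: "card (M x S) \<le> 1" using card_M xV assms(1) by blast
  have "\<exists>j\<in>K. card (N x j S) \<ge> 2"
  proof (rule ccontr)
    assume "\<not> ?thesis" hence "\<forall>j\<in>K. card (N x j S) \<le> 1" by auto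
    hence "(\<Sum>j\<in>K. card (N x j S)) \<le> card K * 1"
      using sum_bounded_above[of K "\<lambda>j. card (N x j S)" 1] by simp
    with dec c6 cM assms(4) show False by linarith
  qed
  then obtain j where j: "j\<in>K" "card (N x j S) \<ge> 2" by auto
  then obtain y1 y2 where y: "y1 \<in> N x j S" "y2 \<in> N x j S" "y1\<noteq>y2" by (meson two_elems)
  have "card (M x S) \<ge> 1" using dec sumle c6 assms(4) by linarith
  hence "M x S \<noteq> {}" by auto
  then obtain u where u: "u \<in> M x S" by auto
  have uS: "u\<in>S" "u\<noteq>x" "{x,u}\<notin>E" using u unfolding M_def by auto
  have yS: "y1\<in>S" "y1\<noteq>x" "{x,y1}\<in>E" "c{x,y1}=j" "y2\<in>S" "y2\<noteq>x" "{x,y2}\<in>E" "c{x,y2}=j"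
    using y unfolding N_def by auto
  have uy: "u \<noteq> y1" "u \<noteq> y2" using uS yS by auto
  have V: "u\<in>V" "y1\<in>V" "y2\<in>V" using uS yS assms(1) by auto
  have a1: "{y1,y2}\<in>E" "c{y1,y2} \<noteq> j" using D2[OF xV V(2,3) yS(2)[symmetric] yS(6)[symmetric] y(3) yS(3,7)] yS by auto
  have a2: "{u,y1}\<in>E" "c{u,y1} \<noteq> j" using D3[OF xV V(1,2) uS(2)[symmetric] yS(2)[symmetric] uy(1) uS(3)] yS by auto
  have a3: "{u,y2}\<in>E" "c{u,y2} \<noteq> j" using D3[OF xV V(1,3) uS(2)[symmetric] yS(6)[symmetric] uy(2) uS(3)] yS by auto
  have k: "c{u,y1} \<in> K" "c{u,y2} \<in> K" "c{y1,y2} \<in> K"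
    using assms(2) uS yS uy y(3) a1 a2 a3 unfolding cols_def by auto
  have "card (K - {j}) \<le> 1" using j assms(3,4) by simp
  hence one: "\<forall>a\<in>K-{j}. \<forall>b\<in>K-{j}. a=b" using assms(3) card_le_Suc0_iff_eq by (metis One_nat_def finite_Diff)
  have eq: "c{u,y1} = c{u,y2}" "c{y1,y2} = c{u,y1}" using one k a1 a2 a3 by auto
  have "c{y1,y2} \<noteq> c{u,y1}"
    using D2[OF V uy y(3) a2(1) a3(1) eq(1)] by simp
  with eq show False by simp
qed

lemma h3: assumes "S\<subseteq>V" "cols S K" "finite K" "card K \<le> 3" shows "card S \<le> 16"
proof (rule ccontr)
  assume "\<not> card S \<le> 16" hence c17: "card S \<ge> 17" by simp
  have fS: "finite S" using assms(1) finV finite_subset by blast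
  have bound: "card S \<le> Suc (card (M x S) + 15)" if x: "x\<in>S" for x
  proof -
    have xV: "x\<in>V" using x assms by auto
    have Nb: "\<forall>j\<in>K. card (N x j S) \<le> 5"
    proof
      fix j assume "j\<in>K"
      have cK: "card (K - {j}) \<le> 2" using \<open>j\<in>K\<close> assms(3,4) by simp
      show "card (N x j S) \<le> 5"
        by (rule h2[OF _ cols_N[OF xV assms(1,2)] _ cK]) (use assms in \<open>auto simp: N_def\<close>)
    qed
    have "(\<Sum>j\<in>K. card (N x j S)) \<le> card K * 5"
      using sum_bounded_above[of K "\<lambda>j. card (N x j S)" 5] Nb by simp
    thus ?thesis using card_decomp[OF x assms(1,2,3)] assms(4) by linarith
  qed
  have M1: "\<exists>u. M x S = {u}" if x: "x\<in>S" for x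
  proof -
    have "card (M x S) \<le> 1" using card_M x assms(1) by blast
    moreover have "card (M x S) \<ge> 1" using bound[OF x] c17 by linarith
    ultimately have "card (M x S) = 1" by simp
    thus ?thesis by (simp add: card_1_singleton_iff)
  qed
  have c17e: "card S = 17"
  proof -
    obtain x where "x \<in> S" using c17 by (metis card.empty ex_in_conv not_numeral_le_zero)
    then show ?thesis using bound[of x] card_M[of x S] assms(1) c17 by auto
  qed
  define p where "p x = (THE u. M x S = {u})" for x
  have pM: "M x S = {p x}" if xS: "x\<in>S" for x
  proof -
    obtain u where u: "M x S = {u}" using M1[OF xS] by blast
    hence "p x = u" unfolding p_def by simp
    thus ?thesis using u by simp
  qed
  have "\<forall>x\<in>S. p x \<in> S \<and> p x \<noteq> x \<and> p (p x) = x"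
  proof
    fix x assume x: "x\<in>S"
    have px: "p x \<in> M x S" using pM[OF x] by simp
    hence px': "p x \<in> S" "p x \<noteq> x" "{x, p x} \<notin> E" unfolding M_def by auto
    have "{p x, x} = {x, p x}" by (rule insert_commute)
    hence "{p x, x} \<notin> E" using px'(3) by simp
    hence "x \<in> M (p x) S" using px' x unfolding M_def by simp
    hence "p (p x) = x" using pM[OF px'(1)] by simp
    thus "p x \<in> S \<and> p x \<noteq> x \<and> p (p x) = x" using px' by simp
  qed
  from inv_even[OF fS this] c17e show False by simp
qed

end


theorem theorem7:
  fixes V :: "'a set" and E :: "'a set set"
  assumes "simple_graph V E" and "card V \<ge> 66" and "in_F 3 V E"
  shows "\<not> (\<exists>c :: 'a set \<Rightarrow> nat. card (c ` E) \<le> 4 \<and> rainbow_cycle_colouring 3 V E c)"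
proof
  assume "\<exists>c :: 'a set \<Rightarrow> nat. card (c ` E) \<le> 4 \<and> rainbow_cycle_colouring 3 V E c"
  then obtain c :: "'a set \<Rightarrow> nat" where cE: "card (c ` E) \<le> 4" and rc: "rainbow_cycle_colouring 3 V E c"
    by blast
  have finV: "finite V" and Esub: "\<And>e. e\<in>E \<Longrightarrow> e \<subseteq> V" using assms(1) unfolding simple_graph_def by auto
  have fE: "finite E"
  proof -
    have "E \<subseteq> Pow V" using Esub by auto
    thus ?thesis using finV by (meson finite_Pow_iff finite_subset)
  qed
  interpret tri V E c
  proof
    show "finite V" by (rule finV)
  next
    fix x y z assume h: "x\<in>V" "y\<in>V" "z\<in>V" "x\<noteq>y" "x\<noteq>z" "y\<noteq>z"
    have "{x,y,z} \<subseteq> V \<and> card {x,y,z} = 3" using h by auto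
    then obtain vs where vs: "rainbow_cycle E c vs" "{x,y,z} \<subseteq> set vs"
      using rc unfolding rainbow_cycle_colouring_def by blast
    show "T E c x y z" by (rule cyc_T[OF vs(1) cE fE]) (use vs(2) h in auto)
  qed
  define K where "K = c ` E"
  have fK: "finite K" using fE unfolding K_def by simp
  have cK: "card K \<le> 4" using cE unfolding K_def by simp
  have colsV: "cols V K" unfolding cols_def K_def by auto
  have cKj: "card (K - {j}) \<le> 3" if "j \<in> K" for j using that fK cK by simp
  obtain v where v: "v \<in> V" using assms(2) by (metis card.empty ex_in_conv not_numeral_le_zero)
  have dec: "card V \<le> Suc (card (M v V) + (\<Sum>j\<in>K. card (N v j V)))"
    by (rule card_decomp[OF v _ colsV fK]) simp
  show False
  proof (cases "M v V = {}")
    case True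
    have "\<forall>j\<in>K. card (N v j V) \<le> 16"
    proof
      fix j assume j: "j\<in>K"
      show "card (N v j V) \<le> 16"
        by (rule h3[OF _ cols_N[OF v _ colsV] _ cKj[OF j]]) (use fK in \<open>auto simp: N_def\<close>)
    qed
    hence "(\<Sum>j\<in>K. card (N v j V)) \<le> card K * 16"
      using sum_bounded_above[of K "\<lambda>j. card (N v j V)" 16] by simp
    with dec True cK assms(2) show False by simp
  next
    case False
    then obtain u where u: "u \<in> M v V" by auto
    have uV: "u\<in>V" "u\<noteq>v" "{v,u}\<notin>E" using u unfolding M_def by auto
    have "\<forall>j\<in>K. card (N v j V) \<le> 15"
    proof
      fix j assume j: "j\<in>K"
      let ?A = "insert u (N v j V)"
      have AV: "?A \<subseteq> V" using uV unfolding N_def by auto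
      have uN: "u \<notin> N v j V" using uV unfolding N_def by auto
      have colsA: "cols ?A (K - {j})"
        unfolding cols_def
      proof (intro ballI impI)
        fix y z assume y: "y \<in> ?A" and z: "z \<in> ?A" and yz: "y\<noteq>z" "{y,z}\<in>E"
        have inK: "c{y,z} \<in> K" using yz unfolding K_def by auto
        have "c{y,z} \<noteq> j"
        proof (cases "y = u")
          case True
          hence zN: "z \<in> N v j V" using z yz by auto
          hence zz: "z\<in>V" "z\<noteq>v" "c{v,z} = j" unfolding N_def by auto
          have "c{v,z} \<noteq> c{u,z}" using D3[OF v uV(1) zz(1) uV(2)[symmetric] zz(2)[symmetric] _ uV(3)] zN uN
            by auto
          thus ?thesis using True zz by simp
        next
          case yu: False
          hence yN: "y \<in> N v j V" using y by auto
          hence yy: "y\<in>V" "y\<noteq>v" "{v,y}\<in>E" "c{v,y} = j" unfolding N_def by auto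
          show ?thesis
          proof (cases "z = u")
            case True
            have "c{v,y} \<noteq> c{u,y}" using D3[OF v uV(1) yy(1) uV(2)[symmetric] yy(2)[symmetric] _ uV(3)] yN uN
              by auto
            thus ?thesis using True yy by (simp add: insert_commute)
          next
            case False
            hence zN: "z \<in> N v j V" using z by auto
            hence zz: "z\<in>V" "z\<noteq>v" "{v,z}\<in>E" "c{v,z} = j" unfolding N_def by auto
            have "c{y,z} \<noteq> c{v,y}"
              using D2[OF v yy(1) zz(1) yy(2)[symmetric] zz(2)[symmetric] yz(1) yy(3) zz(3)] yy zz by simp
            thus ?thesis using yy by simp
          qed
        qed
        thus "c{y,z} \<in> K - {j}" using inK by simp
      qed
      have "card ?A \<le> 16" by (rule h3[OF AV colsA _ cKj[OF j]]) (use fK in simp)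
      moreover have "finite (N v j V)" using finV unfolding N_def by simp
      ultimately show "card (N v j V) \<le> 15" using uN by simp
    qed
    hence "(\<Sum>j\<in>K. card (N v j V)) \<le> card K * 15"
      using sum_bounded_above[of K "\<lambda>j. card (N v j V)" 15] by simp
    moreover have "card (M v V) \<le> 1" by (rule card_M[OF v]) simp
    ultimately show False using dec cK assms(2) by linarith
  qed
qed

end
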